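(* Let $n$ individuals be connected by a directed graph with in-neighborhoods $\mathcal N_i$ (self-loops allowed), and suppose the potential outcomes are linear: $Y_i(\mathbf z)=c_{i,\emptyset}+\sum_{j\in\mathcal N_i}c_{ij}z_j$. Let $L_j=\sum_{i:j\in\mathcal N_i}|c_{ij}|$ and $L_{\max}=\max_jL_j$. Observations are $Y^{\mathrm{obs}}_{i,t}=Y_i(\mathbf z^t)+\varepsilon_{i,t}$ for $t=0,1$, with $\varepsilon_{i,t}$ i.i.d. $N(0,\sigma^2)$ independent of treatments, and $\mathbf z^0=\mathbf 0$. (1) If $\mathbf z^1$ has i.i.d. Bernoulli$(p)$ entries ($0<p\le1$), the estimator $\widehat{\mathrm{TTE}}=\frac1{p}\cdot\frac1n\sum_i(Y^{\mathrm{obs}}_{i,1}-Y^{\mathrm{obs}}_{i,0})$ has variance at most $\frac{1-p}{np}L_{\max}^2+\frac{2\sigma^2}{np^2}$. (2) If $\mathbf z^1$ is the indicator of a uniformly random subset of size $k$ ($1\le k\le n$), the estimator $\widehat{\mathrm{TTE}}=\frac nk\cdot\frac1n\sum_i(Y^{\mathrm{obs}}_{i,1}-Y^{\mathrm{obs}}_{i,0})$ has variance at most $\frac{n-k}{(n-1)k}L_{\max}^2+\frac{2\sigma^2 n}{k^2}$.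
   Context: These estimators are the polynomial-interpolation estimators $\sum_{t=0}^1(\ell_t(1)-\ell_t(0))\frac1n\sum_iY^{\mathrm{obs}}_{i,t}$ with interpolation nodes $(0,p)$ and $(0,k/n)$ respectively, written out explicitly. *)

theory Defs
  imports "HOL-Probability.Probability"
begin

definition lin_outcome ::
  "(nat \<Rightarrow> real) \<Rightarrow> (nat \<Rightarrow> nat \<Rightarrow> real) \<Rightarrow> (nat \<Rightarrow> nat set) \<Rightarrow> nat \<Rightarrow> (nat \<Rightarrow> real) \<Rightarrow> real"
  where "lin_outcome c0 c N i z = c0 i + (\<Sum>j\<in>N i. c i j * z j)"

definition L_out :: "nat \<Rightarrow> (nat \<Rightarrow> nat \<Rightarrow> real) \<Rightarrow> (nat \<Rightarrow> nat set) \<Rightarrow> nat \<Rightarrow> real"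
  where "L_out n c N j = (\<Sum>i\<in>{i. i < n \<and> j \<in> N i}. \<bar>c i j\<bar>)"

definition L_max :: "nat \<Rightarrow> (nat \<Rightarrow> nat \<Rightarrow> real) \<Rightarrow> (nat \<Rightarrow> nat set) \<Rightarrow> real"
  where "L_max n c N = Max (L_out n c N ` {..<n})"

definition Y_obs ::
  "(nat \<Rightarrow> real) \<Rightarrow> (nat \<Rightarrow> nat \<Rightarrow> real) \<Rightarrow> (nat \<Rightarrow> nat set)
   \<Rightarrow> (nat \<Rightarrow> 'w \<Rightarrow> real) \<Rightarrow> (nat \<Rightarrow> nat \<Rightarrow> 'w \<Rightarrow> real) \<Rightarrow> nat \<Rightarrow> nat \<Rightarrow> 'w \<Rightarrow> real"
  where "Y_obs c0 c N Z eps i t \<omega> =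
    (if t = 0 then lin_outcome c0 c N i (\<lambda>_. 0) else lin_outcome c0 c N i (\<lambda>j. Z j \<omega>)) + eps i t \<omega>"

definition noise_ok :: "'w measure \<Rightarrow> nat \<Rightarrow> real \<Rightarrow> (nat \<Rightarrow> 'w \<Rightarrow> real) \<Rightarrow> (nat \<Rightarrow> nat \<Rightarrow> 'w \<Rightarrow> real) \<Rightarrow> bool"
  where "noise_ok M n \<sigma> Z eps \<longleftrightarrow>
     prob_space.indep_vars M (\<lambda>_. borel) (\<lambda>(i,t). eps i t) ({..<n} \<times> {0,1}) \<and>
     (\<forall>i<n. \<forall>t\<in>{0,1}. distributed M lborel (eps i t) (\<lambda>x. ennreal (normal_density 0 \<sigma> x))) \<and>
     (\<forall>j<n. Z j \<in> borel_measurable M) \<and>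
     prob_space.indep_set M
        (sigma_sets (space M) {Z j -` A \<inter> space M | j A. j < n \<and> A \<in> sets borel})
        (sigma_sets (space M) {eps i t -` A \<inter> space M | i t A. i < n \<and> t \<in> {0,1} \<and> A \<in> sets borel})"

end

theory Submission
  imports Defs
begin


lemma (in prob_space) normal_facts:
  assumes s: "0 < \<sigma>" and D: "distributed M lborel X (\<lambda>x. ennreal (normal_density 0 \<sigma> x))"
  shows "integrable M X" "integrable M (\<lambda>\<omega>. X \<omega> * X \<omega>)" "expectation X = 0"
    "expectation (\<lambda>\<omega>. X \<omega> * X \<omega>) = \<sigma>\<^sup>2"
proof -
  show "integrable M X"
  proof (rule distributed_integrable_var[OF D])
    show "integrable lborel (\<lambda>x. normal_density 0 \<sigma> x * x)"
      using integrable_normal_moment[where k=1 and \<mu>=0, OF s] by simp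
  qed (simp add: normal_density_nonneg)
  have "integrable lborel (\<lambda>x. normal_density 0 \<sigma> x * (x * x))"
    using integrable_normal_moment[where k=2 and \<mu>=0, OF s] by (simp add: power2_eq_square)
  then show "integrable M (\<lambda>\<omega>. X \<omega> * X \<omega>)"
    using distributed_integrable[OF D, of "\<lambda>x. x * x"] by (simp add: normal_density_nonneg)
  show e: "expectation X = 0"
    using normal_distributed_expectation[OF s D] .
  show "expectation (\<lambda>\<omega>. X \<omega> * X \<omega>) = \<sigma>\<^sup>2"
    using normal_distributed_variance[OF s D] e by (simp add: power2_eq_square)
qed

lemma (in prob_space) indep_set_mono:
  "indep_set A B \<Longrightarrow> A' \<subseteq> A \<Longrightarrow> B' \<subseteq> B \<Longrightarrow> indep_set A' B'"
  unfolding indep_set_def by (rule indep_sets_mono_sets) (auto split: bool.split)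

lemma (in prob_space) var_formula:
  fixes Z :: "'j \<Rightarrow> 'a \<Rightarrow> real" and e :: "'u \<Rightarrow> 'a \<Rightarrow> real"
  assumes fin: "finite J" "finite I"
  and iZ: "\<And>j. j\<in>J \<Longrightarrow> integrable M (Z j)"
  and iZZ: "\<And>j l. j\<in>J \<Longrightarrow> l\<in>J \<Longrightarrow> integrable M (\<lambda>\<omega>. Z j \<omega> * Z l \<omega>)"
  and ie: "\<And>u. u\<in>I \<Longrightarrow> integrable M (e u)"
  and iee: "\<And>u v. u\<in>I \<Longrightarrow> v\<in>I \<Longrightarrow> integrable M (\<lambda>\<omega>. e u \<omega> * e v \<omega>)"
  and iZe: "\<And>j u. j\<in>J \<Longrightarrow> u\<in>I \<Longrightarrow> integrable M (\<lambda>\<omega>. Z j \<omega> * e u \<omega>)"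
  and Ee: "\<And>u. u\<in>I \<Longrightarrow> expectation (e u) = 0"
  and Eee: "\<And>u v. u\<in>I \<Longrightarrow> v\<in>I \<Longrightarrow> expectation (\<lambda>\<omega>. e u \<omega> * e v \<omega>) = (if u = v then s2 else 0)"
  and EZe: "\<And>j u. j\<in>J \<Longrightarrow> u\<in>I \<Longrightarrow> expectation (\<lambda>\<omega>. Z j \<omega> * e u \<omega>) = 0"
  shows "variance (\<lambda>\<omega>. \<alpha> * ((\<Sum>j\<in>J. a j * Z j \<omega>) + (\<Sum>u\<in>I. b u * e u \<omega>)))
    = \<alpha>\<^sup>2 * ((\<Sum>j\<in>J. \<Sum>l\<in>J. a j * a l * expectation (\<lambda>\<omega>. Z j \<omega> * Z l \<omega>))
        - (\<Sum>j\<in>J. a j * expectation (Z j))\<^sup>2 + s2 * (\<Sum>u\<in>I. (b u)\<^sup>2))"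
proof -
  define A where "A \<omega> = (\<Sum>j\<in>J. a j * Z j \<omega>)" for \<omega>
  define B where "B \<omega> = (\<Sum>u\<in>I. b u * e u \<omega>)" for \<omega>
  have iA: "integrable M A" unfolding A_def by (auto intro!: integrable_mult_right iZ)
  have iB: "integrable M B" unfolding B_def by (auto intro!: integrable_mult_right ie)
  have AA: "(\<lambda>\<omega>. A \<omega> * A \<omega>) = (\<lambda>\<omega>. \<Sum>j\<in>J. \<Sum>l\<in>J. (a j * a l) * (Z j \<omega> * Z l \<omega>))"
    by (simp add: A_def sum_product mult_ac)
  have AB: "(\<lambda>\<omega>. A \<omega> * B \<omega>) = (\<lambda>\<omega>. \<Sum>j\<in>J. \<Sum>u\<in>I. (a j * b u) * (Z j \<omega> * e u \<omega>))"
    by (simp add: A_def B_def sum_product mult_ac)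
  have BB: "(\<lambda>\<omega>. B \<omega> * B \<omega>) = (\<lambda>\<omega>. \<Sum>u\<in>I. \<Sum>v\<in>I. (b u * b v) * (e u \<omega> * e v \<omega>))"
    by (simp add: B_def sum_product mult_ac)
  have iAA: "integrable M (\<lambda>\<omega>. A \<omega> * A \<omega>)" unfolding AA by (auto intro!: integrable_mult_right iZZ)
  have iAB: "integrable M (\<lambda>\<omega>. A \<omega> * B \<omega>)" unfolding AB by (auto intro!: integrable_mult_right iZe)
  have iBB: "integrable M (\<lambda>\<omega>. B \<omega> * B \<omega>)" unfolding BB by (auto intro!: integrable_mult_right iee)
  have EA: "expectation A = (\<Sum>j\<in>J. a j * expectation (Z j))"
    unfolding A_def by (simp add: iZ)
  have EB: "expectation B = 0"
    unfolding B_def by (simp add: ie Ee)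
  have EAA: "expectation (\<lambda>\<omega>. A \<omega> * A \<omega>) = (\<Sum>j\<in>J. \<Sum>l\<in>J. a j * a l * expectation (\<lambda>\<omega>. Z j \<omega> * Z l \<omega>))"
    unfolding AA by (simp add: iZZ)
  have EAB: "expectation (\<lambda>\<omega>. A \<omega> * B \<omega>) = 0"
    unfolding AB by (simp add: iZe EZe)
  have "expectation (\<lambda>\<omega>. B \<omega> * B \<omega>) = (\<Sum>u\<in>I. \<Sum>v\<in>I. b u * b v * (if u = v then s2 else 0))"
    unfolding BB by (simp add: iee Eee)
  also have "\<dots> = s2 * (\<Sum>u\<in>I. (b u)\<^sup>2)"
    using fin by (simp add: if_distrib sum_distrib_left power2_eq_square mult_ac cong: if_cong)
  finally have EBB: "expectation (\<lambda>\<omega>. B \<omega> * B \<omega>) = s2 * (\<Sum>u\<in>I. (b u)\<^sup>2)" .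
  define X where "X \<omega> = \<alpha> * (A \<omega> + B \<omega>)" for \<omega>
  have X2: "(\<lambda>\<omega>. (X \<omega>)\<^sup>2) = (\<lambda>\<omega>. \<alpha>\<^sup>2 * (A \<omega> * A \<omega>) + (2 * \<alpha>\<^sup>2) * (A \<omega> * B \<omega>) + \<alpha>\<^sup>2 * (B \<omega> * B \<omega>))"
    by (simp add: X_def power2_eq_square algebra_simps)
  have iX: "integrable M X" unfolding X_def using iA iB by auto
  have iX2: "integrable M (\<lambda>\<omega>. (X \<omega>)\<^sup>2)" unfolding X2 using iAA iAB iBB by auto
  have EX: "expectation X = \<alpha> * (\<Sum>j\<in>J. a j * expectation (Z j))"
    unfolding X_def using iA iB EA EB by simp
  have EX2: "expectation (\<lambda>\<omega>. (X \<omega>)\<^sup>2) = \<alpha>\<^sup>2 * (\<Sum>j\<in>J. \<Sum>l\<in>J. a j * a l * expectation (\<lambda>\<omega>. Z j \<omega> * Z l \<omega>))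
       + \<alpha>\<^sup>2 * (s2 * (\<Sum>u\<in>I. (b u)\<^sup>2))"
    unfolding X2 using iAA iAB iBB EAA EAB EBB by simp
  have V: "variance X = expectation (\<lambda>\<omega>. (X \<omega>)\<^sup>2) - (expectation X)\<^sup>2"
    using variance_eq[OF iX iX2] .
  have XX: "X = (\<lambda>\<omega>. \<alpha> * ((\<Sum>j\<in>J. a j * Z j \<omega>) + (\<Sum>u\<in>I. b u * e u \<omega>)))"
    by (simp add: X_def A_def B_def fun_eq_iff)
  have "variance (\<lambda>\<omega>. \<alpha> * ((\<Sum>j\<in>J. a j * Z j \<omega>) + (\<Sum>u\<in>I. b u * e u \<omega>))) = variance X"
    by (simp only: XX)
  also have "\<dots> = expectation (\<lambda>\<omega>. (X \<omega>)\<^sup>2) - (expectation X)\<^sup>2" by (rule V)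
  also have "\<dots> = \<alpha>\<^sup>2 * ((\<Sum>j\<in>J. \<Sum>l\<in>J. a j * a l * expectation (\<lambda>\<omega>. Z j \<omega> * Z l \<omega>))
        - (\<Sum>j\<in>J. a j * expectation (Z j))\<^sup>2 + s2 * (\<Sum>u\<in>I. (b u)\<^sup>2))"
    unfolding EX2 EX by (simp add: power_mult_distrib algebra_simps)
  finally show ?thesis .
qed

lemma (in prob_space) est_variance:
  fixes Z :: "nat \<Rightarrow> 'a \<Rightarrow> real" and eps :: "nat \<Rightarrow> nat \<Rightarrow> 'a \<Rightarrow> real"
  assumes s: "0 < \<sigma>" and nz: "noise_ok M n \<sigma> Z eps"
    and Z01: "\<forall>j<n. \<forall>\<omega>\<in>space M. Z j \<omega> \<in> {0,1}"
    and Nsub: "\<And>i. i < n \<Longrightarrow> N i \<subseteq> {..<n}"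
  shows "variance (\<lambda>\<omega>. \<alpha> * (\<Sum>i<n. Y_obs c0 c N Z eps i 1 \<omega> - Y_obs c0 c N Z eps i 0 \<omega>))
    = \<alpha>\<^sup>2 * ((\<Sum>j<n. \<Sum>l<n. (\<Sum>i\<in>{i. i < n \<and> j \<in> N i}. c i j) * (\<Sum>i\<in>{i. i < n \<and> l \<in> N i}. c i l)
                  * expectation (\<lambda>\<omega>. Z j \<omega> * Z l \<omega>))
        - (\<Sum>j<n. (\<Sum>i\<in>{i. i < n \<and> j \<in> N i}. c i j) * expectation (Z j))\<^sup>2 + \<sigma>\<^sup>2 * (2 * real n))"
proof -
  define a where "a j = (\<Sum>i\<in>{i. i < n \<and> j \<in> N i}. c i j)" for j
  define I where "I = {..<n} \<times> {0::nat,1}"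
  define e where "e = case_prod eps"
  define b :: "nat \<times> nat \<Rightarrow> real" where "b u = (if snd u = 1 then 1 else -1)" for u
  have ind_e: "indep_vars (\<lambda>_. borel) e I"
    and dist: "\<And>i t. i<n \<Longrightarrow> t\<in>{0,1} \<Longrightarrow> distributed M lborel (eps i t) (\<lambda>x. ennreal (normal_density 0 \<sigma> x))"
    and Zm: "\<And>j. j<n \<Longrightarrow> Z j \<in> borel_measurable M"
    and indZe: "indep_set
        (sigma_sets (space M) {Z j -` A \<inter> space M | j A. j < n \<and> A \<in> sets borel})
        (sigma_sets (space M) {eps i t -` A \<inter> space M | i t A. i < n \<and> t \<in> {0,1} \<and> A \<in> sets borel})"
    using nz unfolding noise_ok_def I_def e_def by auto
  have distu: "\<And>u. u \<in> I \<Longrightarrow> distributed M lborel (e u) (\<lambda>x. ennreal (normal_density 0 \<sigma> x))"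
    using dist by (auto simp: I_def e_def)
  have ie: "\<And>u. u\<in>I \<Longrightarrow> integrable M (e u)" using normal_facts(1)[OF s distu] .
  have Ee: "\<And>u. u\<in>I \<Longrightarrow> expectation (e u) = 0" using normal_facts(3)[OF s distu] .
  have em: "\<And>u. u\<in>I \<Longrightarrow> e u \<in> borel_measurable M"
    using distributed_measurable[OF distu] by simp
  have iZ: "\<And>j. j<n \<Longrightarrow> integrable M (Z j)"
  proof -
    fix j assume j: "j < n"
    show "integrable M (Z j)"
    proof (rule integrable_const_bound[where B=1])
      show "AE x in M. norm (Z j x) \<le> 1" using Z01 j by (intro AE_I2) force
    qed (rule Zm[OF j])
  qed
  have iZZ: "\<And>j l. j<n \<Longrightarrow> l<n \<Longrightarrow> integrable M (\<lambda>\<omega>. Z j \<omega> * Z l \<omega>)"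
  proof -
    fix j l assume j: "j < n" and l: "l < n"
    show "integrable M (\<lambda>\<omega>. Z j \<omega> * Z l \<omega>)"
    proof (rule integrable_const_bound[where B=1])
      show "AE x in M. norm (Z j x * Z l x) \<le> 1"
      proof (intro AE_I2)
        fix x assume "x \<in> space M"
        then have "Z j x \<in> {0,1}" "Z l x \<in> {0,1}" using Z01 j l by auto
        then show "norm (Z j x * Z l x) \<le> 1" by auto
      qed
    qed (use Zm[OF j] Zm[OF l] in simp)
  qed
  have indZe1: "\<And>j u. j<n \<Longrightarrow> u\<in>I \<Longrightarrow> indep_var borel (Z j) borel (e u)"
  proof -
    fix j u assume j: "j<n" and u: "u \<in> I"
    obtain i t where ut: "u = (i,t)" "i < n" "t \<in> {0,1}" using u by (cases u) (auto simp: I_def)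
    show "indep_var borel (Z j) borel (e u)"
      unfolding indep_var_eq
    proof (intro conjI)
      show "random_variable borel (Z j)" using Zm[OF j] by simp
      show "random_variable borel (e u)" using em[OF u] by simp
      show "indep_set (sigma_sets (space M) {Z j -` A \<inter> space M |A. A \<in> sets borel})
          (sigma_sets (space M) {e u -` A \<inter> space M |A. A \<in> sets borel})"
        apply (rule indep_set_mono[OF indZe])
        apply (rule sigma_sets_mono', use j in blast)
        apply (rule sigma_sets_mono', use ut in \<open>auto simp: e_def\<close>)
        done
    qed
  qed
  have iZe: "\<And>j u. j<n \<Longrightarrow> u\<in>I \<Longrightarrow> integrable M (\<lambda>\<omega>. Z j \<omega> * e u \<omega>)"
    using indep_var_integrable[OF indZe1 iZ ie] by blast
  have EZe: "\<And>j u. j<n \<Longrightarrow> u\<in>I \<Longrightarrow> expectation (\<lambda>\<omega>. Z j \<omega> * e u \<omega>) = 0"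
    using indep_var_lebesgue_integral[OF indZe1 iZ ie] Ee by simp
  have pair: "integrable M (\<lambda>\<omega>. e u \<omega> * e v \<omega>) \<and> expectation (\<lambda>\<omega>. e u \<omega> * e v \<omega>) = (if u = v then \<sigma>\<^sup>2 else 0)"
    if u: "u \<in> I" and v: "v \<in> I" for u v
  proof (cases "u = v")
    case True
    then show ?thesis using normal_facts(2,4)[OF s distu[OF u]] by simp
  next
    case False
    have ind2: "indep_vars (\<lambda>_. borel) e {u,v}"
      by (rule indep_vars_subset[OF ind_e]) (use u v in auto)
    have "integrable M (\<lambda>\<omega>. \<Prod>w\<in>{u,v}. e w \<omega>)"
      by (rule indep_vars_integrable[OF _ ind2]) (use u v ie in auto)
    moreover have "expectation (\<lambda>\<omega>. \<Prod>w\<in>{u,v}. e w \<omega>) = (\<Prod>w\<in>{u,v}. expectation (e w))"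
      by (rule indep_vars_lebesgue_integral[OF _ ind2]) (use u v ie in auto)
    ultimately show ?thesis using False Ee[OF u] by simp
  qed
  have fin: "finite {..<n}" "finite I" by (auto simp: I_def)
  have V: "variance (\<lambda>\<omega>. \<alpha> * ((\<Sum>j\<in>{..<n}. a j * Z j \<omega>) + (\<Sum>u\<in>I. b u * e u \<omega>)))
    = \<alpha>\<^sup>2 * ((\<Sum>j\<in>{..<n}. \<Sum>l\<in>{..<n}. a j * a l * expectation (\<lambda>\<omega>. Z j \<omega> * Z l \<omega>))
        - (\<Sum>j\<in>{..<n}. a j * expectation (Z j))\<^sup>2 + \<sigma>\<^sup>2 * (\<Sum>u\<in>I. (b u)\<^sup>2))"
  proof (rule var_formula[OF fin])
    show "\<And>u v. u \<in> I \<Longrightarrow> v \<in> I \<Longrightarrow> integrable M (\<lambda>\<omega>. e u \<omega> * e v \<omega>)"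
      using pair by blast
    show "\<And>u v. u \<in> I \<Longrightarrow> v \<in> I \<Longrightarrow> expectation (\<lambda>\<omega>. e u \<omega> * e v \<omega>) = (if u = v then \<sigma>\<^sup>2 else 0)"
      using pair by blast
  qed (use iZ iZZ ie iZe Ee EZe in simp_all)
  have b2: "(\<Sum>u\<in>I. (b u)\<^sup>2) = 2 * real n"
  proof -
    have "\<And>u. (b u)\<^sup>2 = 1" by (simp add: b_def)
    then show ?thesis by (simp add: I_def card_cartesian_product)
  qed
  have swap: "(\<Sum>i<n. \<Sum>j\<in>N i. c i j * Z j \<omega>) = (\<Sum>j<n. a j * Z j \<omega>)" for \<omega>
  proof -
    have "(\<Sum>i<n. \<Sum>j\<in>N i. c i j * Z j \<omega>) = (\<Sum>i<n. \<Sum>j<n. if j \<in> N i then c i j * Z j \<omega> else 0)"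
    proof (rule sum.cong[OF refl])
      fix i assume "i \<in> {..<n}"
      then have eq: "{j \<in> {..<n}. j \<in> N i} = N i" using Nsub by auto
      show "(\<Sum>j\<in>N i. c i j * Z j \<omega>) = (\<Sum>j<n. if j \<in> N i then c i j * Z j \<omega> else 0)"
        using sum.inter_filter[of "{..<n}" "\<lambda>j. c i j * Z j \<omega>" "\<lambda>j. j \<in> N i"] unfolding eq by simp
    qed
    also have "\<dots> = (\<Sum>j<n. \<Sum>i<n. if j \<in> N i then c i j * Z j \<omega> else 0)"
      by (rule sum.swap)
    also have "\<dots> = (\<Sum>j<n. a j * Z j \<omega>)"
    proof (rule sum.cong[OF refl])
      fix j
      have "{i. i < n \<and> j \<in> N i} = {i \<in> {..<n}. j \<in> N i}" by auto
      then show "(\<Sum>i<n. if j \<in> N i then c i j * Z j \<omega> else 0) = a j * Z j \<omega>"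
        unfolding a_def \<open>{i. i < n \<and> j \<in> N i} = {i \<in> {..<n}. j \<in> N i}\<close>
        by (simp only: sum.inter_filter[OF finite_lessThan] sum_distrib_right) (rule sum.cong, auto)
    qed
    finally show ?thesis .
  qed
  have noise: "(\<Sum>u\<in>I. b u * e u \<omega>) = (\<Sum>i<n. eps i 1 \<omega> - eps i 0 \<omega>)" for \<omega>
    unfolding I_def sum.cartesian_product' by (simp add: b_def e_def)
  have est: "(\<Sum>i<n. Y_obs c0 c N Z eps i 1 \<omega> - Y_obs c0 c N Z eps i 0 \<omega>)
      = (\<Sum>j\<in>{..<n}. a j * Z j \<omega>) + (\<Sum>u\<in>I. b u * e u \<omega>)" for \<omega>
  proof -
    have "\<And>i. Y_obs c0 c N Z eps i 1 \<omega> - Y_obs c0 c N Z eps i 0 \<omega>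
        = (\<Sum>j\<in>N i. c i j * Z j \<omega>) + (eps i 1 \<omega> - eps i 0 \<omega>)"
      by (simp add: Y_obs_def lin_outcome_def)
    then show ?thesis unfolding swap[symmetric] noise by (simp only: sum.distrib)
  qed
  show ?thesis
    unfolding est unfolding V b2 unfolding a_def by (rule refl)
qed



lemma card_supsets:
  assumes A: "finite A" and BA: "B \<subseteq> A" and Bk: "card B \<le> k"
  shows "card {S. S \<subseteq> A \<and> card S = k \<and> B \<subseteq> S} = (card A - card B) choose (k - card B)"
proof -
  have fB: "finite B" using A BA finite_subset by blast
  have "bij_betw (\<lambda>S. S - B) {S. S \<subseteq> A \<and> card S = k \<and> B \<subseteq> S} {S'. S' \<subseteq> A - B \<and> card S' = k - card B}"
  proof (rule bij_betw_byWitness[where f'="\<lambda>S'. S' \<union> B"])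
    show "\<forall>S\<in>{S. S \<subseteq> A \<and> card S = k \<and> B \<subseteq> S}. S - B \<union> B = S" by auto
    show "\<forall>S'\<in>{S'. S' \<subseteq> A - B \<and> card S' = k - card B}. S' \<union> B - B = S'" by auto
    show "(\<lambda>S. S - B) ` {S. S \<subseteq> A \<and> card S = k \<and> B \<subseteq> S} \<subseteq> {S'. S' \<subseteq> A - B \<and> card S' = k - card B}"
    proof
      fix X assume "X \<in> (\<lambda>S. S - B) ` {S. S \<subseteq> A \<and> card S = k \<and> B \<subseteq> S}"
      then obtain S where S: "S \<subseteq> A" "card S = k" "B \<subseteq> S" "X = S - B" by auto
      have "finite S" using S A finite_subset by blast
      then show "X \<in> {S'. S' \<subseteq> A - B \<and> card S' = k - card B}"
        using S by (auto simp: card_Diff_subset fB)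
    qed
    show "(\<lambda>S'. S' \<union> B) ` {S'. S' \<subseteq> A - B \<and> card S' = k - card B} \<subseteq> {S. S \<subseteq> A \<and> card S = k \<and> B \<subseteq> S}"
    proof
      fix X assume "X \<in> (\<lambda>S'. S' \<union> B) ` {S'. S' \<subseteq> A - B \<and> card S' = k - card B}"
      then obtain S' where S: "S' \<subseteq> A - B" "card S' = k - card B" "X = S' \<union> B" by auto
      have "finite S'" using S A finite_subset by blast
      moreover have "S' \<inter> B = {}" using S by auto
      ultimately have "card X = card S' + card B" using S fB by (simp add: card_Un_disjoint)
      then show "X \<in> {S. S \<subseteq> A \<and> card S = k \<and> B \<subseteq> S}" using S BA Bk by auto
    qed
  qed
  then have "card {S. S \<subseteq> A \<and> card S = k \<and> B \<subseteq> S} = card {S'. S' \<subseteq> A - B \<and> card S' = k - card B}"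
    by (rule bij_betw_same_card)
  also have "\<dots> = card (A - B) choose (k - card B)" using A by (simp add: n_subsets)
  also have "card (A - B) = card A - card B" using BA fB by (simp add: card_Diff_subset)
  finally show ?thesis .
qed

lemma binom_ratio1:
  assumes "1 \<le> k" "k \<le> n"
  shows "real ((n - 1) choose (k - 1)) / real (n choose k) = real k / real n"
proof -
  obtain m r where m: "n = Suc m" and r: "k = Suc r" using assms by (cases n; cases k) auto
  define X where "X = real (m choose r)"
  define Y where "Y = real (Suc m choose Suc r)"
  have "Suc m * (m choose r) = (Suc m choose Suc r) * Suc r" by (rule Suc_times_binomial_eq)
  then have e: "real (Suc m) * X = Y * real (Suc r)"
    unfolding X_def Y_def by (metis of_nat_mult)
  have "(Suc m choose Suc r) > 0" using assms m r by (simp del: binomial_Suc_Suc)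
  then have Yp: "Y > 0" unfolding Y_def by (simp only: of_nat_0_less_iff)
  have l: "real ((n - 1) choose (k - 1)) = X" "real (n choose k) = Y"
    unfolding X_def Y_def m r by simp_all
  show ?thesis unfolding l using e Yp unfolding m r
    by (simp add: field_simps del: of_nat_Suc)
qed

lemma binom_ratio2:
  assumes "2 \<le> k" "k \<le> n"
  shows "real ((n - 2) choose (k - 2)) / real (n choose k) = real k * (real k - 1) / (real n * (real n - 1))"
proof -
  obtain m r where m: "n = Suc (Suc m)" and r: "k = Suc (Suc r)" using assms
    by (metis add_2_eq_Suc le_Suc_ex le_trans)
  define X where "X = real (m choose r)"
  define Y where "Y = real (Suc m choose Suc r)"
  define W where "W = real (Suc (Suc m) choose Suc (Suc r))"
  have h1: "Suc m * (m choose r) = (Suc m choose Suc r) * Suc r" by (rule Suc_times_binomial_eq)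
  have h2: "Suc (Suc m) * (Suc m choose Suc r) = (Suc (Suc m) choose Suc (Suc r)) * Suc (Suc r)"
    by (rule Suc_times_binomial_eq)
  have h1r: "real (Suc m) * X = Y * real (Suc r)"
    using h1 unfolding X_def Y_def by (metis of_nat_mult)
  have h2r: "real (Suc (Suc m)) * Y = W * real (Suc (Suc r))"
    using h2 unfolding W_def Y_def by (metis of_nat_mult)
  have "(Suc (Suc m) choose Suc (Suc r)) > 0" using assms m r by (simp del: binomial_Suc_Suc)
  then have Wp: "W > 0" unfolding W_def by (simp only: of_nat_0_less_iff)
  have l: "real ((n - 2) choose (k - 2)) = X" "real (n choose k) = W"
    unfolding X_def W_def m r by simp_all
  have "X * (real (Suc m) * real (Suc (Suc m))) = W * (real (Suc r) * real (Suc (Suc r)))"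
  proof -
    have "X * (real (Suc m) * real (Suc (Suc m))) = (real (Suc m) * X) * real (Suc (Suc m))"
      by (simp only: mult_ac)
    also have "\<dots> = real (Suc r) * (real (Suc (Suc m)) * Y)" unfolding h1r by (simp only: mult_ac)
    also have "\<dots> = W * (real (Suc r) * real (Suc (Suc r)))" unfolding h2r by (simp only: mult_ac)
    finally show ?thesis .
  qed
  moreover have k1: "real k - 1 = real (Suc r)" "real n - 1 = real (Suc m)" using m r by simp_all
  moreover have "real k = real (Suc (Suc r))" "real n = real (Suc (Suc m))" using m r by simp_all
  ultimately show ?thesis unfolding l k1 using Wp
    by (subst frac_eq_eq) (simp_all only: of_nat_0_less_iff of_nat_0_eq_iff mult_eq_0_iff, simp, simp, simp add: mult_ac)
qed

lemma quad_form:
  fixes a :: "'j \<Rightarrow> real"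
  assumes "finite J"
  shows "(\<Sum>j\<in>J. \<Sum>l\<in>J. a j * a l * (if j = l then m1 else q)) - (\<Sum>j\<in>J. a j * m1)\<^sup>2
    = (m1 - q) * (\<Sum>j\<in>J. (a j)\<^sup>2) + (q - m1\<^sup>2) * (\<Sum>j\<in>J. a j)\<^sup>2"
proof -
  have "(\<Sum>j\<in>J. \<Sum>l\<in>J. a j * a l * (if j = l then m1 else q))
      = (\<Sum>j\<in>J. \<Sum>l\<in>J. q * (a j * a l) + (if j = l then (m1 - q) * (a j)\<^sup>2 else 0))"
    by (intro sum.cong refl) (auto simp: algebra_simps power2_eq_square)
  also have "\<dots> = q * (\<Sum>j\<in>J. a j)\<^sup>2 + (m1 - q) * (\<Sum>j\<in>J. (a j)\<^sup>2)"
  proof -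
    have sq: "(\<Sum>j\<in>J. a j)\<^sup>2 = (\<Sum>j\<in>J. \<Sum>l\<in>J. a j * a l)" by (simp add: power2_eq_square sum_product)
    have "(\<Sum>j\<in>J. \<Sum>l\<in>J. q * (a j * a l) + (if j = l then (m1 - q) * (a j)\<^sup>2 else 0))
        = (\<Sum>j\<in>J. \<Sum>l\<in>J. q * (a j * a l)) + (\<Sum>j\<in>J. (m1 - q) * (a j)\<^sup>2)"
      using assms by (simp add: sum.distrib)
    also have "(\<Sum>j\<in>J. \<Sum>l\<in>J. q * (a j * a l)) = q * (\<Sum>j\<in>J. a j)\<^sup>2"
      unfolding sq by (simp add: sum_distrib_left)
    finally show ?thesis by (simp add: sum_distrib_left)
  qed
  moreover have "(\<Sum>j\<in>J. a j * m1) = m1 * (\<Sum>j\<in>J. a j)"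
    by (simp add: sum_distrib_left mult.commute)
  then have "(\<Sum>j\<in>J. a j * m1)\<^sup>2 = m1\<^sup>2 * (\<Sum>j\<in>J. a j)\<^sup>2"
    by (simp only: power_mult_distrib)
  ultimately show ?thesis
    by (simp add: algebra_simps)
qed

lemma a_bound:
  assumes "n \<ge> 1" "j < n"
  shows "(\<Sum>i\<in>{i. i < n \<and> j \<in> N i}. c i j)\<^sup>2 \<le> (L_max n c N)\<^sup>2"
proof -
  have "\<bar>\<Sum>i\<in>{i. i < n \<and> j \<in> N i}. c i j\<bar> \<le> L_out n c N j"
    unfolding L_out_def by (rule sum_abs)
  also have "\<dots> \<le> L_max n c N"
    unfolding L_max_def using assms by (intro Max_ge) auto
  finally have h: "\<bar>\<Sum>i\<in>{i. i < n \<and> j \<in> N i}. c i j\<bar> \<le> L_max n c N" .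
  then have "\<bar>\<Sum>i\<in>{i. i < n \<and> j \<in> N i}. c i j\<bar> \<le> \<bar>L_max n c N\<bar>" by linarith
  then show ?thesis by (simp only: abs_le_square_iff)
qed

lemma a_sum_bound:
  assumes "n \<ge> 1"
  shows "(\<Sum>j<n. (\<Sum>i\<in>{i. i < n \<and> j \<in> N i}. c i j)\<^sup>2) \<le> real n * (L_max n c N)\<^sup>2"
proof -
  have "(\<Sum>j<n. (\<Sum>i\<in>{i. i < n \<and> j \<in> N i}. c i j)\<^sup>2) \<le> (\<Sum>j<n. (L_max n c N)\<^sup>2)"
    by (rule sum_mono) (use a_bound[OF assms] in auto)
  then show ?thesis by simp
qed



lemma (in prob_space) Z_prod_prob:
  fixes Z :: "nat \<Rightarrow> 'a \<Rightarrow> real"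
  assumes Zj: "Z j \<in> borel_measurable M" and Zl: "Z l \<in> borel_measurable M"
    and j01: "\<forall>\<omega>\<in>space M. Z j \<omega> \<in> {0,1}" and l01: "\<forall>\<omega>\<in>space M. Z l \<omega> \<in> {0,1}"
  shows "expectation (\<lambda>\<omega>. Z j \<omega> * Z l \<omega>) = prob {\<omega>\<in>space M. Z j \<omega> = 1 \<and> Z l \<omega> = 1}"
proof -
  have "expectation (\<lambda>\<omega>. Z j \<omega> * Z l \<omega>) = expectation (indicator {\<omega>\<in>space M. Z j \<omega> = 1 \<and> Z l \<omega> = 1})"
  proof (rule Bochner_Integration.integral_cong[OF refl])
    fix \<omega> assume "\<omega> \<in> space M"
    then have "Z j \<omega> \<in> {0,1}" "Z l \<omega> \<in> {0,1}" using j01 l01 by auto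
    then show "Z j \<omega> * Z l \<omega> = indicator {\<omega>\<in>space M. Z j \<omega> = 1 \<and> Z l \<omega> = 1} \<omega>"
      using \<open>\<omega> \<in> space M\<close> by (auto simp: indicator_def)
  qed
  also have "\<dots> = prob {\<omega>\<in>space M. Z j \<omega> = 1 \<and> Z l \<omega> = 1}"
    by (simp add: Int_absorb2 subset_iff)
  finally show ?thesis .
qed

lemma (in prob_space) Z_integrable:
  fixes Z :: "nat \<Rightarrow> 'a \<Rightarrow> real"
  assumes Zj: "Z j \<in> borel_measurable M" and j01: "\<forall>\<omega>\<in>space M. Z j \<omega> \<in> {0,1}"
  shows "integrable M (Z j)"
proof (rule integrable_const_bound[where B=1])
  show "AE x in M. norm (Z j x) \<le> 1" using j01 by (intro AE_I2) force
qed (rule Zj)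

lemma (in prob_space) bern_moments:
  fixes Z :: "nat \<Rightarrow> 'a \<Rightarrow> real"
  assumes ind: "indep_vars (\<lambda>_. borel) Z {..<n}"
    and Z01: "\<forall>j<n. \<forall>\<omega>\<in>space M. Z j \<omega> \<in> {0,1}"
    and P: "\<forall>j<n. prob {\<omega>\<in>space M. Z j \<omega> = 1} = p"
    and j: "j < n" and l: "l < n"
  shows "expectation (\<lambda>\<omega>. Z j \<omega> * Z l \<omega>) = (if j = l then p else p\<^sup>2)"
    and "expectation (Z j) = p"
proof -
  have Zm: "\<And>i. i < n \<Longrightarrow> Z i \<in> borel_measurable M"
    using ind unfolding indep_vars_def2 by auto
  have EZ: "expectation (Z i) = p" if i: "i < n" for i
  proof -
    have "expectation (\<lambda>\<omega>. Z i \<omega> * Z i \<omega>) = prob {\<omega>\<in>space M. Z i \<omega> = 1 \<and> Z i \<omega> = 1}"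
      using Z_prod_prob[of Z i i, OF Zm[OF i] Zm[OF i]] Z01 i by blast
    moreover have "(\<lambda>\<omega>. Z i \<omega> * Z i \<omega>) = (\<lambda>\<omega>. Z i \<omega>) \<or> True" by simp
    moreover have "expectation (\<lambda>\<omega>. Z i \<omega> * Z i \<omega>) = expectation (Z i)"
    proof (rule Bochner_Integration.integral_cong[OF refl])
      fix \<omega> assume "\<omega> \<in> space M"
      then have "Z i \<omega> \<in> {0,1}" using Z01 i by auto
      then show "Z i \<omega> * Z i \<omega> = Z i \<omega>" by auto
    qed
    ultimately show ?thesis using P i by simp
  qed
  then show "expectation (Z j) = p" using j .
  show "expectation (\<lambda>\<omega>. Z j \<omega> * Z l \<omega>) = (if j = l then p else p\<^sup>2)"
  proof (cases "j = l")
    case True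
    then show ?thesis
      using Z_prod_prob[of Z j j, OF Zm[OF j] Zm[OF j]] Z01 j P by simp
  next
    case False
    have ind2: "indep_vars (\<lambda>_. borel) Z {j,l}"
      by (rule indep_vars_subset[OF ind]) (use j l in auto)
    have "expectation (\<lambda>\<omega>. \<Prod>w\<in>{j,l}. Z w \<omega>) = (\<Prod>w\<in>{j,l}. expectation (Z w))"
      by (rule indep_vars_lebesgue_integral[OF _ ind2])
         (use j l Z01 in \<open>auto intro!: Z_integrable Zm\<close>)
    then show ?thesis using False EZ[OF j] EZ[OF l] by (simp add: power2_eq_square)
  qed
qed

lemma (in prob_space) subset_moments:
  fixes Z :: "nat \<Rightarrow> 'a \<Rightarrow> real"
  assumes Zm: "\<And>j. j < n \<Longrightarrow> Z j \<in> borel_measurable M"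
    and Z01: "\<forall>j<n. \<forall>\<omega>\<in>space M. Z j \<omega> \<in> {0,1}"
    and D: "\<forall>S. S \<subseteq> {..<n} \<and> card S = k \<longrightarrow>
         measure M {\<omega>\<in>space M. {j. j < n \<and> Z j \<omega> = 1} = S} = 1 / real (n choose k)"
    and k: "1 \<le> k" "k \<le> n"
    and j: "j < n" and l: "l < n"
  shows "prob {\<omega>\<in>space M. Z j \<omega> = 1 \<and> Z l \<omega> = 1}
     = (if j = l then real k / real n else real k * (real k - 1) / (real n * (real n - 1)))"
proof -
  define T where "T \<omega> = {j. j < n \<and> Z j \<omega> = 1}" for \<omega>
  define K where "K = {S. S \<subseteq> {..<n} \<and> card S = k}"
  define E where "E S = {\<omega>\<in>space M. T \<omega> = S}" for S
  have finK: "finite K" unfolding K_def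
    by (rule finite_subset[of _ "Pow {..<n}"]) auto
  have cardK: "card K = n choose k" unfolding K_def using n_subsets[of "{..<n}" k] by simp
  have Cpos: "(n choose k) > 0" using k by simp
  have EK: "E S \<in> events" if "S \<subseteq> {..<n}" for S
  proof -
    have "E S = {\<omega>\<in>space M. \<forall>i\<in>{..<n}. (Z i \<omega> = 1) = (i \<in> S)}"
      unfolding E_def T_def using that by auto
    also have "\<dots> \<in> events"
    proof (rule sets.sets_Collect_finite_All)
      fix i assume i: "i \<in> {..<n}"
      have [measurable]: "Z i \<in> borel_measurable M" using Zm i by simp
      show "{\<omega>\<in>space M. (Z i \<omega> = 1) = (i \<in> S)} \<in> events" by measurable
    qed simp
    finally show ?thesis .
  qed
  have disj: "disjoint_family_on E K" unfolding disjoint_family_on_def E_def by auto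
  have PE: "prob (E S) = 1 / real (n choose k)" if "S \<in> K" for S
    using D that unfolding K_def E_def T_def by auto
  have U: "prob (\<Union>S\<in>K. E S) = 1"
  proof -
    have "prob (\<Union>S\<in>K. E S) = (\<Sum>S\<in>K. prob (E S))"
      by (rule measure_finite_Union[OF finK]) (use EK disj in \<open>auto simp: K_def\<close>)
    also have "\<dots> = real (card K) * (1 / real (n choose k))" using PE by simp
    finally show ?thesis using cardK Cpos by simp
  qed
  have AEK: "AE \<omega> in M. T \<omega> \<in> K"
    using AE_prob_1[OF U] by eventually_elim (auto simp: E_def)
  define K' where "K' = {S. S \<subseteq> {..<n} \<and> card S = k \<and> {j,l} \<subseteq> S}"
  have K'K: "K' \<subseteq> K" unfolding K'_def K_def by auto
  have "prob {\<omega>\<in>space M. Z j \<omega> = 1 \<and> Z l \<omega> = 1} = prob (\<Union>S\<in>K'. E S)"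
  proof (rule measure_eq_AE)
    show "AE x in M. (x \<in> {\<omega> \<in> space M. Z j \<omega> = 1 \<and> Z l \<omega> = 1}) = (x \<in> (\<Union>S\<in>K'. E S))"
      using AEK
    proof eventually_elim
      case (elim x)
      then show ?case unfolding E_def K'_def K_def T_def using j l by auto
    qed
    have [measurable]: "Z j \<in> borel_measurable M" "Z l \<in> borel_measurable M" using Zm j l by auto
    show "{\<omega> \<in> space M. Z j \<omega> = 1 \<and> Z l \<omega> = 1} \<in> events" by measurable
    show "(\<Union>S\<in>K'. E S) \<in> events"
      using EK K'K finK by (intro sets.finite_UN) (auto simp: K_def intro: finite_subset)
  qed
  also have "\<dots> = (\<Sum>S\<in>K'. prob (E S))"
    by (rule measure_finite_Union) (use EK disj K'K finK in \<open>auto simp: K_def intro: finite_subset disjoint_family_on_mono\<close>)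
  also have "\<dots> = (\<Sum>S\<in>K'. 1 / real (n choose k))"
    by (rule sum.cong) (use PE K'K in auto)
  also have "\<dots> = real (card K') / real (n choose k)" by simp
  also have "\<dots> = (if j = l then real k / real n else real k * (real k - 1) / (real n * (real n - 1)))"
  proof (cases "j = l")
    case True
    have "card K' = (n - 1) choose (k - 1)"
      unfolding K'_def using card_supsets[of "{..<n}" "{j}" k] True j k by simp
    then show ?thesis using True binom_ratio1[OF k] by simp
  next
    case False
    show ?thesis
    proof (cases "k \<ge> 2")
      case True
      have "card K' = (n - 2) choose (k - 2)"
        unfolding K'_def using card_supsets[of "{..<n}" "{j,l}" k] False True j l by (simp add: numeral_2_eq_2)
      moreover have "k \<le> n" using k by simp
      ultimately show ?thesis using False binom_ratio2[OF True] by simp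
    next
      case k2: False
      then have "k = 1" using k by simp
      have "K' = {}"
      proof -
        { fix S assume "S \<in> K'"
          then have "card S = 1" "{j,l} \<subseteq> S" "finite S" using \<open>k = 1\<close> unfolding K'_def
            by (auto intro: finite_subset)
          then have "card {j,l} \<le> 1" by (metis card_mono)
          then have False using False by simp }
        then show ?thesis by blast
      qed
      then show ?thesis using False \<open>k = 1\<close> by simp
    qed
  qed
  finally show ?thesis .
qed



lemma (in prob_space) part1:
  fixes Z :: "nat \<Rightarrow> 'a \<Rightarrow> real" and eps :: "nat \<Rightarrow> nat \<Rightarrow> 'a \<Rightarrow> real"
  assumes n: "n \<ge> 1" and Nsub: "\<And>i. i < n \<Longrightarrow> N i \<subseteq> {..<n}" and s: "\<sigma> > 0"
    and p: "0 < p" "p \<le> 1" and nz: "noise_ok M n \<sigma> Z eps"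
    and ind: "indep_vars (\<lambda>_. borel) Z {..<n}"
    and Z01: "\<forall>j<n. \<forall>\<omega>\<in>space M. Z j \<omega> \<in> {0,1}"
    and P: "\<forall>j<n. measure M {\<omega>\<in>space M. Z j \<omega> = 1} = p"
  shows "variance (\<lambda>\<omega>. (1 / p) * (1 / real n) *
              (\<Sum>i<n. Y_obs c0 c N Z eps i 1 \<omega> - Y_obs c0 c N Z eps i 0 \<omega>))
      \<le> (1 - p) / (real n * p) * (L_max n c N)\<^sup>2 + 2 * \<sigma>\<^sup>2 / (real n * p\<^sup>2)"
proof -
  define a where "a j = (\<Sum>i\<in>{i. i < n \<and> j \<in> N i}. c i j)" for j
  define \<alpha> where "\<alpha> = (1 / p) * (1 / real n)"
  have V: "variance (\<lambda>\<omega>. \<alpha> * (\<Sum>i<n. Y_obs c0 c N Z eps i 1 \<omega> - Y_obs c0 c N Z eps i 0 \<omega>))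
    = \<alpha>\<^sup>2 * ((\<Sum>j<n. \<Sum>l<n. a j * a l * expectation (\<lambda>\<omega>. Z j \<omega> * Z l \<omega>))
        - (\<Sum>j<n. a j * expectation (Z j))\<^sup>2 + \<sigma>\<^sup>2 * (2 * real n))"
    unfolding a_def by (rule est_variance[OF s nz Z01 Nsub])
  have m2: "(\<Sum>j<n. \<Sum>l<n. a j * a l * expectation (\<lambda>\<omega>. Z j \<omega> * Z l \<omega>))
      = (\<Sum>j<n. \<Sum>l<n. a j * a l * (if j = l then p else p\<^sup>2))"
    by (intro sum.cong refl) (simp add: bern_moments(1)[OF ind Z01 P])
  have m1: "(\<Sum>j<n. a j * expectation (Z j)) = (\<Sum>j<n. a j * p)"
    by (intro sum.cong refl) (simp add: bern_moments(2)[OF ind Z01 P])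
  define S where "S = (\<Sum>j<n. (a j)\<^sup>2)"
  define L2 where "L2 = (L_max n c N)\<^sup>2"
  have SL: "S \<le> real n * L2" unfolding S_def L2_def a_def using a_sum_bound[OF n] .
  have var: "variance (\<lambda>\<omega>. (1 / p) * (1 / real n) *
              (\<Sum>i<n. Y_obs c0 c N Z eps i 1 \<omega> - Y_obs c0 c N Z eps i 0 \<omega>))
      = \<alpha>\<^sup>2 * ((p - p\<^sup>2) * S + \<sigma>\<^sup>2 * (2 * real n))"
    using V unfolding \<alpha>_def m2 m1 quad_form[OF finite_lessThan] S_def
    by simp
  have pp: "0 \<le> p - p\<^sup>2" using p by (simp add: power2_eq_square mult_left_le)
  have "\<alpha>\<^sup>2 * ((p - p\<^sup>2) * S + \<sigma>\<^sup>2 * (2 * real n)) \<le> \<alpha>\<^sup>2 * ((p - p\<^sup>2) * (real n * L2) + \<sigma>\<^sup>2 * (2 * real n))"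
    using SL pp by (intro mult_left_mono add_right_mono mult_left_mono) auto
  also have "\<dots> = (1 - p) / (real n * p) * L2 + 2 * \<sigma>\<^sup>2 / (real n * p\<^sup>2)"
    unfolding \<alpha>_def using p n by (simp add: field_simps power2_eq_square)
  finally show ?thesis unfolding var L2_def .
qed

lemma (in prob_space) part2:
  fixes Z :: "nat \<Rightarrow> 'a \<Rightarrow> real" and eps :: "nat \<Rightarrow> nat \<Rightarrow> 'a \<Rightarrow> real"
  assumes n: "n \<ge> 1" and Nsub: "\<And>i. i < n \<Longrightarrow> N i \<subseteq> {..<n}" and s: "\<sigma> > 0"
    and k: "1 \<le> k" "k \<le> n" and nz: "noise_ok M n \<sigma> Z eps"
    and Z01: "\<forall>j<n. \<forall>\<omega>\<in>space M. Z j \<omega> \<in> {0,1}"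
    and D: "\<forall>S. S \<subseteq> {..<n} \<and> card S = k \<longrightarrow>
         measure M {\<omega>\<in>space M. {j. j < n \<and> Z j \<omega> = 1} = S} = 1 / real (n choose k)"
  shows "variance (\<lambda>\<omega>. (real n / real k) * (1 / real n) *
              (\<Sum>i<n. Y_obs c0 c N Z eps i 1 \<omega> - Y_obs c0 c N Z eps i 0 \<omega>))
      \<le> (real n - real k) / ((real n - 1) * real k) * (L_max n c N)\<^sup>2
         + 2 * \<sigma>\<^sup>2 * real n / (real k)\<^sup>2"
proof -
  define a where "a j = (\<Sum>i\<in>{i. i < n \<and> j \<in> N i}. c i j)" for j
  define \<alpha> where "\<alpha> = (real n / real k) * (1 / real n)"
  define m where "m = real k / real n"
  define q where "q = real k * (real k - 1) / (real n * (real n - 1))"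
  have Zm: "\<And>j. j < n \<Longrightarrow> Z j \<in> borel_measurable M" using nz unfolding noise_ok_def by auto
  have V: "variance (\<lambda>\<omega>. \<alpha> * (\<Sum>i<n. Y_obs c0 c N Z eps i 1 \<omega> - Y_obs c0 c N Z eps i 0 \<omega>))
    = \<alpha>\<^sup>2 * ((\<Sum>j<n. \<Sum>l<n. a j * a l * expectation (\<lambda>\<omega>. Z j \<omega> * Z l \<omega>))
        - (\<Sum>j<n. a j * expectation (Z j))\<^sup>2 + \<sigma>\<^sup>2 * (2 * real n))"
    unfolding a_def by (rule est_variance[OF s nz Z01 Nsub])
  have EZZ: "expectation (\<lambda>\<omega>. Z j \<omega> * Z l \<omega>) = (if j = l then m else q)" if "j < n" "l < n" for j l
    using Z_prod_prob[of Z j l] Zm that Z01 subset_moments[OF Zm Z01 D k that] unfolding m_def q_def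
    by simp
  have EZ: "expectation (Z j) = m" if "j < n" for j
  proof -
    have "expectation (Z j) = expectation (\<lambda>\<omega>. Z j \<omega> * Z j \<omega>)"
    proof (rule Bochner_Integration.integral_cong[OF refl])
      fix \<omega> assume "\<omega> \<in> space M"
      then have "Z j \<omega> \<in> {0,1}" using Z01 that by auto
      then show "Z j \<omega> = Z j \<omega> * Z j \<omega>" by auto
    qed
    then show ?thesis using EZZ[OF that that] by simp
  qed
  have m2: "(\<Sum>j<n. \<Sum>l<n. a j * a l * expectation (\<lambda>\<omega>. Z j \<omega> * Z l \<omega>))
      = (\<Sum>j<n. \<Sum>l<n. a j * a l * (if j = l then m else q))"
    by (intro sum.cong refl) (simp add: EZZ)
  have m1: "(\<Sum>j<n. a j * expectation (Z j)) = (\<Sum>j<n. a j * m)"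
    by (intro sum.cong refl) (simp add: EZ)
  define S where "S = (\<Sum>j<n. (a j)\<^sup>2)"
  define T where "T = (\<Sum>j<n. a j)\<^sup>2"
  define L2 where "L2 = (L_max n c N)\<^sup>2"
  have SL: "S \<le> real n * L2" unfolding S_def L2_def a_def using a_sum_bound[OF n] .
  have var: "variance (\<lambda>\<omega>. (real n / real k) * (1 / real n) *
              (\<Sum>i<n. Y_obs c0 c N Z eps i 1 \<omega> - Y_obs c0 c N Z eps i 0 \<omega>))
      = \<alpha>\<^sup>2 * ((m - q) * S + (q - m\<^sup>2) * T + \<sigma>\<^sup>2 * (2 * real n))"
    using V unfolding \<alpha>_def m2 m1 quad_form[OF finite_lessThan] S_def T_def
    by simp
  have al: "\<alpha> = 1 / real k" unfolding \<alpha>_def using n by simp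
  show ?thesis
  proof (cases "n = 1")
    case True
    then have "k = 1" using k by simp
    have "S = T" unfolding S_def T_def True by simp
    moreover have "m = 1" "q = 0" unfolding m_def q_def using True \<open>k = 1\<close> by simp_all
    ultimately show ?thesis unfolding var al using True \<open>k = 1\<close> by simp
  next
    case False
    then have n2: "real n \<ge> 2" using n by simp
    have kn: "real k \<le> real n" "real k \<ge> 1" using k by simp_all
    have mq: "m - q = real k * (real n - real k) / (real n * (real n - 1))"
      unfolding m_def q_def using n2 by (simp add: field_simps)
    have qm: "q - m\<^sup>2 = real k * (real k - real n) / ((real n)\<^sup>2 * (real n - 1))"
      unfolding m_def q_def using n2 by (simp add: field_simps power2_eq_square)
    have qm0: "q - m\<^sup>2 \<le> 0" unfolding qm using n2 kn
      by (intro divide_nonpos_pos mult_nonneg_nonpos) auto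
    have mq0: "m - q \<ge> 0" unfolding mq using n2 kn by (intro divide_nonneg_pos mult_nonneg_nonneg) auto
    have T0: "T \<ge> 0" unfolding T_def by simp
    have "\<alpha>\<^sup>2 * ((m - q) * S + (q - m\<^sup>2) * T + \<sigma>\<^sup>2 * (2 * real n))
        \<le> \<alpha>\<^sup>2 * ((m - q) * (real n * L2) + \<sigma>\<^sup>2 * (2 * real n))"
    proof (intro mult_left_mono)
      have "(q - m\<^sup>2) * T \<le> 0" using qm0 T0 by (simp add: mult_nonpos_nonneg)
      moreover have "(m - q) * S \<le> (m - q) * (real n * L2)" using SL mq0 by (rule mult_left_mono)
      ultimately show "(m - q) * S + (q - m\<^sup>2) * T + \<sigma>\<^sup>2 * (2 * real n)
          \<le> (m - q) * (real n * L2) + \<sigma>\<^sup>2 * (2 * real n)" by linarith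
    qed simp
    also have "\<dots> = (real n - real k) / ((real n - 1) * real k) * L2 + 2 * \<sigma>\<^sup>2 * real n / (real k)\<^sup>2"
      unfolding al mq using n2 kn by (simp add: field_simps power2_eq_square)
    finally show ?thesis unfolding var L2_def .
  qed
qed


theorem corollary1:
  fixes n :: nat and N :: "nat \<Rightarrow> nat set"
    and c0 :: "nat \<Rightarrow> real" and c :: "nat \<Rightarrow> nat \<Rightarrow> real" and \<sigma> :: real
  assumes "n \<ge> 1"
    and "\<And>i. i < n \<Longrightarrow> N i \<subseteq> {..<n}"
    and "\<sigma> > 0"
  shows
   "(\<forall>(M :: 'w measure) (Z :: nat \<Rightarrow> 'w \<Rightarrow> real) eps (p :: real).
      prob_space M \<and> 0 < p \<and> p \<le> 1 \<and>
      noise_ok M n \<sigma> Z eps \<and>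
      prob_space.indep_vars M (\<lambda>_. borel) Z {..<n} \<and>
      (\<forall>j<n. \<forall>\<omega>\<in>space M. Z j \<omega> \<in> {0,1}) \<and>
      (\<forall>j<n. measure M {\<omega>\<in>space M. Z j \<omega> = 1} = p)
      \<longrightarrow>
      prob_space.variance M
        (\<lambda>\<omega>. (1 / p) * (1 / real n) *
              (\<Sum>i<n. Y_obs c0 c N Z eps i 1 \<omega> - Y_obs c0 c N Z eps i 0 \<omega>))
      \<le> (1 - p) / (real n * p) * (L_max n c N)\<^sup>2 + 2 * \<sigma>\<^sup>2 / (real n * p\<^sup>2))
    \<and>
    (\<forall>(M :: 'v measure) (Z :: nat \<Rightarrow> 'v \<Rightarrow> real) eps (k :: nat).
      prob_space M \<and> 1 \<le> k \<and> k \<le> n \<and>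
      noise_ok M n \<sigma> Z eps \<and>
      (\<forall>j<n. \<forall>\<omega>\<in>space M. Z j \<omega> \<in> {0,1}) \<and>
      (\<forall>S. S \<subseteq> {..<n} \<and> card S = k \<longrightarrow>
         measure M {\<omega>\<in>space M. {j. j < n \<and> Z j \<omega> = 1} = S} = 1 / real (n choose k))
      \<longrightarrow>
      prob_space.variance M
        (\<lambda>\<omega>. (real n / real k) * (1 / real n) *
              (\<Sum>i<n. Y_obs c0 c N Z eps i 1 \<omega> - Y_obs c0 c N Z eps i 0 \<omega>))
      \<le> (real n - real k) / ((real n - 1) * real k) * (L_max n c N)\<^sup>2
         + 2 * \<sigma>\<^sup>2 * real n / (real k)\<^sup>2)"
  proof (intro conjI allI impI)
  fix M :: "'w measure" and Z :: "nat \<Rightarrow> 'w \<Rightarrow> real" and eps p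
  assume H: "prob_space M \<and> 0 < p \<and> p \<le> 1 \<and>
      noise_ok M n \<sigma> Z eps \<and>
      prob_space.indep_vars M (\<lambda>_. borel) Z {..<n} \<and>
      (\<forall>j<n. \<forall>\<omega>\<in>space M. Z j \<omega> \<in> {0,1}) \<and>
      (\<forall>j<n. measure M {\<omega>\<in>space M. Z j \<omega> = 1} = p)"
  then interpret prob_space M by simp
  show "variance
        (\<lambda>\<omega>. (1 / p) * (1 / real n) *
              (\<Sum>i<n. Y_obs c0 c N Z eps i 1 \<omega> - Y_obs c0 c N Z eps i 0 \<omega>))
      \<le> (1 - p) / (real n * p) * (L_max n c N)\<^sup>2 + 2 * \<sigma>\<^sup>2 / (real n * p\<^sup>2)"
    using H by (intro part1[OF assms(1) assms(2) assms(3)]) auto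
next
  fix M :: "'v measure" and Z :: "nat \<Rightarrow> 'v \<Rightarrow> real" and eps and k :: nat
  assume H: "prob_space M \<and> 1 \<le> k \<and> k \<le> n \<and>
      noise_ok M n \<sigma> Z eps \<and>
      (\<forall>j<n. \<forall>\<omega>\<in>space M. Z j \<omega> \<in> {0,1}) \<and>
      (\<forall>S. S \<subseteq> {..<n} \<and> card S = k \<longrightarrow>
         measure M {\<omega>\<in>space M. {j. j < n \<and> Z j \<omega> = 1} = S} = 1 / real (n choose k))"
  then interpret prob_space M by simp
  show "variance
        (\<lambda>\<omega>. (real n / real k) * (1 / real n) *
              (\<Sum>i<n. Y_obs c0 c N Z eps i 1 \<omega> - Y_obs c0 c N Z eps i 0 \<omega>))
      \<le> (real n - real k) / ((real n - 1) * real k) * (L_max n c N)\<^sup>2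
         + 2 * \<sigma>\<^sup>2 * real n / (real k)\<^sup>2"
    using H by (intro part2[OF assms(1) assms(2) assms(3)]) auto
qed

end
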